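(* Let $n\ge2$, $1\le k\le n-1$, $r\ge1$. Let $h$ be continuous on $[l_F,r_F]$ with $h^{(k+r-1)}$ continuous on $(l_F,r_F)$. If $l_F>-\infty$, $r_F=\infty$ and $F(x)=1-e^{-c(x-l_F)}$ for $x\ge l_F$ with some $c>0$, then \[ E[h^{(k+r-1)}(X(n))\mid X(n-k)=u,\ X(n+r)=v]=\frac{(k+r-1)!}{(k-1)!(r-1)!}\,{}_{r-1}M_{k-1}(u,v)\qquad (l_F<u<v<r_F). \]
   Context: $X_1,X_2,\dots$ are i.i.d. copies of a random variable $X$ with distribution function $F$; $l_F=\inf\{x:F(x)>0\}$, $r_F=\sup\{x:F(x)<1\}$. Upper record times: $L(1)=1$, $L(m)=\min\{j>L(m-1): X_j>X_{L(m-1)}\}$; upper record values $X(m)=X_{L(m)}$. With $R(x)=-\ln(1-F(x))$, conditional expectations given $X(n-k)=u$, $X(n+r)=v$ are taken with respect to the conditional density $\frac{(k+r-1)!}{(k-1)!(r-1)!}[\frac{R(t)-R(u)}{R(v)-R(u)}]^{k-1}[\frac{R(v)-R(t)}{R(v)-R(u)}]^{r-1}\frac{R'(t)}{R(v)-R(u)}$, $u<t<v$. For a function $h$, $M(u,v)=\frac{h(v)-h(u)}{v-u}$ ($u\ne v$) and ${}_iM_j(u,v)=\frac{\partial^{i+j}}{\partial u^i\partial v^j}M(u,v)$. *)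

theory Defs
  imports "HOL-Analysis.Analysis"
begin

definition hazR :: "(real \<Rightarrow> real) \<Rightarrow> real \<Rightarrow> real" where
  "hazR F x = - ln (1 - F x)"

text \<open>Conditional density of X(n) given X(n-k)=u, X(n+r)=v, at point t (u<t<v).\<close>
definition cond_dens :: "(real \<Rightarrow> real) \<Rightarrow> nat \<Rightarrow> nat \<Rightarrow> real \<Rightarrow> real \<Rightarrow> real \<Rightarrow> real" where
  "cond_dens F k r u v t =
     fact (k + r - 1) / (fact (k - 1) * fact (r - 1))
     * ((hazR F t - hazR F u) / (hazR F v - hazR F u)) ^ (k - 1)
     * ((hazR F v - hazR F t) / (hazR F v - hazR F u)) ^ (r - 1)
     * deriv (hazR F) t / (hazR F v - hazR F u)"

definition cond_exp :: "(real \<Rightarrow> real) \<Rightarrow> nat \<Rightarrow> nat \<Rightarrow> (real \<Rightarrow> real) \<Rightarrow> real \<Rightarrow> real \<Rightarrow> real" where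
  "cond_exp F k r g u v = integral {u<..<v} (\<lambda>t. g t * cond_dens F k r u v t)"

definition Mh :: "(real \<Rightarrow> real) \<Rightarrow> real \<Rightarrow> real \<Rightarrow> real" where
  "Mh h u v = (h v - h u) / (v - u)"

text \<open>iMj(u,v) = d^(i+j) M / du^i dv^j (v-derivatives taken first, then u).\<close>
definition Mij :: "(real \<Rightarrow> real) \<Rightarrow> nat \<Rightarrow> nat \<Rightarrow> real \<Rightarrow> real \<Rightarrow> real" where
  "Mij h i j u v = (deriv ^^ i) (\<lambda>u'. (deriv ^^ j) (\<lambda>v'. Mh h u' v') v) u"

end

theory Submission
  imports Defs
begin

definition JJ :: "(nat \<Rightarrow> real \<Rightarrow> real) \<Rightarrow> nat \<Rightarrow> nat \<Rightarrow> real \<Rightarrow> real \<Rightarrow> real" where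
  "JJ g a b u v = integral {0..1} (\<lambda>s. g (a+b+1) (u + s*(v-u)) * s^b * (1-s)^a)"

lemma cvx_pos: fixes l u x t :: real
  assumes "l < u" "l < x" "0 \<le> t" "t \<le> 1" shows "l < u + t*(x-u)"
proof -
  have "u + t*(x-u) = (1-t)*u + t*x" by (simp add: algebra_simps)
  moreover have "(1-t)*u \<ge> (1-t)*l" using assms by (intro mult_left_mono) auto
  moreover have "t*x \<ge> t*l" using assms by (intro mult_left_mono) auto
  moreover have "(1-t)*u > (1-t)*l \<or> t*x > t*l" using assms
    by (cases "t = 1") (auto intro!: mult_strict_left_mono)
  ultimately show ?thesis by (auto simp: algebra_simps)
qed

lemma JJ_dv:
  assumes der: "\<And>m x. m < N \<Longrightarrow> l < x \<Longrightarrow> (g m has_real_derivative g (Suc m) x) (at x)"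
    and cont: "\<And>m. m \<le> N \<Longrightarrow> continuous_on {l<..} (g m)"
    and ab: "a+b+1 < N" and lu: "l < u" and lv: "l < v"
  shows "((\<lambda>x. JJ g a b u x) has_real_derivative JJ g a (Suc b) u v) (at v)"
proof -
  let ?m = "a+b+1"
  have cg: "continuous_on {l<..} (g ?m)" "continuous_on {l<..} (g (Suc ?m))" using cont ab by auto
  have "((\<lambda>x. integral (cbox 0 1) (\<lambda>s. g ?m (u + s*(x-u)) * s^b * (1-s)^a)) has_field_derivative
      integral (cbox 0 1) (\<lambda>s. g (Suc ?m) (u + s*(v-u)) * s * s^b * (1-s)^a)) (at v within {l<..})"
  proof (rule leibniz_rule_field_derivative[where fx = "\<lambda>x s. g (Suc ?m) (u + s*(x-u)) * s * s^b * (1-s)^a"])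
    fix x t :: real assume x: "x \<in> {l<..}" and t: "t \<in> cbox 0 1"
    have p: "l < u + t*(x-u)" using cvx_pos[of l u x t] x t lu by auto
    have "((\<lambda>x. u + t*(x-u)) has_real_derivative t) (at x)"
      by (auto intro!: derivative_eq_intros)
    from DERIV_chain2[OF der[OF _ p] this] ab
    have dd: "((\<lambda>x. g ?m (u + t*(x-u))) has_real_derivative g (Suc ?m) (u + t*(x-u)) * t) (at x)" by simp
    have "((\<lambda>x. g ?m (u + t*(x-u)) * (t^b * (1-t)^a)) has_real_derivative g (Suc ?m) (u + t*(x-u)) * t * (t^b * (1-t)^a)) (at x)"
      by (rule DERIV_cmult_right[OF dd])
    then show "((\<lambda>x. g ?m (u + t*(x-u)) * t^b * (1-t)^a) has_field_derivative g (Suc ?m) (u + t*(x-u)) * t * t^b * (1-t)^a) (at x within {l<..})"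
      unfolding mult.assoc by (rule has_field_derivative_at_within)
  next
    fix x :: real assume x: "x \<in> {l<..}"
    have "continuous_on (cbox 0 1) (\<lambda>s. g ?m (u + s*(x-u)) * s^b * (1-s)^a)"
      apply (intro continuous_intros continuous_on_compose2[OF cg(1)])
      using cvx_pos[of l u x] x lu by auto
    then show "(\<lambda>s. g ?m (u + s*(x-u)) * s^b * (1-s)^a) integrable_on cbox 0 1"
      by (rule integrable_continuous)
  next
    show "continuous_on ({l<..} \<times> cbox 0 1) (\<lambda>(x, s). g (Suc ?m) (u + s*(x-u)) * s * s^b * (1-s)^a)"
    proof -
      have c2: "continuous_on ({l<..} \<times> cbox 0 1) (\<lambda>p. g (Suc ?m) (u + snd p * (fst p - u)))"
        by (rule continuous_on_compose2[OF cg(2)]) (auto intro!: continuous_intros cvx_pos lu simp: mem_Times_iff)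
      show ?thesis unfolding split_beta
        by (intro continuous_intros c2)
    qed
  qed (use lv in auto)
  then show ?thesis
    by (simp add: JJ_def at_within_open[of v "{l<..}"] lv mult_ac)
qed


lemma JJ_du:
  assumes der: "\<And>m x. m < N \<Longrightarrow> l < x \<Longrightarrow> (g m has_real_derivative g (Suc m) x) (at x)"
    and cont: "\<And>m. m \<le> N \<Longrightarrow> continuous_on {l<..} (g m)"
    and ab: "a+b+1 < N" and lu: "l < u" and lv: "l < v"
  shows "((\<lambda>x. JJ g a b x v) has_real_derivative JJ g (Suc a) b u v) (at u)"
proof -
  let ?m = "a+b+1"
  have cg: "continuous_on {l<..} (g ?m)" "continuous_on {l<..} (g (Suc ?m))" using cont ab by auto
  have "((\<lambda>x. integral (cbox 0 1) (\<lambda>s. g ?m (x + s*(v-x)) * s^b * (1-s)^a)) has_field_derivative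
      integral (cbox 0 1) (\<lambda>s. g (Suc ?m) (u + s*(v-u)) * (1 - s) * s^b * (1-s)^a)) (at u within {l<..})"
  proof (rule leibniz_rule_field_derivative[where fx = "\<lambda>x s. g (Suc ?m) (x + s*(v-x)) * (1 - s) * s^b * (1-s)^a"])
    fix x t :: real assume x: "x \<in> {l<..}" and t: "t \<in> cbox 0 1"
    have p: "l < x + t*(v-x)" using cvx_pos[of l x v t] x t lv by auto
    have "((\<lambda>x. x + t*(v-x)) has_real_derivative 1 - t) (at x)"
      by (auto intro!: derivative_eq_intros)
    from DERIV_chain2[OF der[OF _ p] this] ab
    have dd: "((\<lambda>x. g ?m (x + t*(v-x))) has_real_derivative g (Suc ?m) (x + t*(v-x)) * (1 - t)) (at x)" by simp
    have "((\<lambda>x. g ?m (x + t*(v-x)) * (t^b * (1-t)^a)) has_real_derivative g (Suc ?m) (x + t*(v-x)) * (1 - t) * (t^b * (1-t)^a)) (at x)"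
      by (rule DERIV_cmult_right[OF dd])
    then show "((\<lambda>x. g ?m (x + t*(v-x)) * t^b * (1-t)^a) has_field_derivative g (Suc ?m) (x + t*(v-x)) * (1 - t) * t^b * (1-t)^a) (at x within {l<..})"
      unfolding mult.assoc by (rule has_field_derivative_at_within)
  next
    fix x :: real assume x: "x \<in> {l<..}"
    have "continuous_on (cbox 0 1) (\<lambda>s. g ?m (x + s*(v-x)) * s^b * (1-s)^a)"
      apply (intro continuous_intros continuous_on_compose2[OF cg(1)])
      using cvx_pos[of l x v] x lv by auto
    then show "(\<lambda>s. g ?m (x + s*(v-x)) * s^b * (1-s)^a) integrable_on cbox 0 1"
      by (rule integrable_continuous)
  next
    show "continuous_on ({l<..} \<times> cbox 0 1) (\<lambda>(x, s). g (Suc ?m) (x + s*(v-x)) * (1 - s) * s^b * (1-s)^a)"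
    proof -
      have c2: "continuous_on ({l<..} \<times> cbox 0 1) (\<lambda>p. g (Suc ?m) (fst p + snd p * (v - fst p)))"
        by (rule continuous_on_compose2[OF cg(2)]) (auto intro!: continuous_intros cvx_pos lv simp: mem_Times_iff)
      show ?thesis unfolding split_beta
        by (intro continuous_intros c2)
    qed
  qed (use lu in auto)
  then show ?thesis
    by (simp add: JJ_def at_within_open[of u "{l<..}"] lu mult_ac)
qed

lemma JJ_base:
  fixes h :: "real \<Rightarrow> real"
  assumes der: "\<And>x. l < x \<Longrightarrow> (h has_real_derivative g1 x) (at x)"
    and lu: "l < u" and lv: "l < v" and uv: "u \<noteq> v"
  shows "Mh h u v = integral {0..1} (\<lambda>s. g1 (u + s*(v-u)))"
proof -
  have "((\<lambda>s. (v-u) * g1 (u + s*(v-u))) has_integral (h (u + 1*(v-u)) - h (u + 0*(v-u)))) {0..1}"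
  proof (rule fundamental_theorem_of_calculus)
    fix s :: real assume s: "s \<in> {0..1}"
    have p: "l < u + s*(v-u)" using cvx_pos[of l u v s] s lu lv by auto
    have "((\<lambda>s. u + s*(v-u)) has_real_derivative (v-u)) (at s)"
      by (auto intro!: derivative_eq_intros)
    from DERIV_chain2[OF der[OF p] this]
    have "((\<lambda>s. h (u + s*(v-u))) has_real_derivative (v-u) * g1 (u + s*(v-u))) (at s)"
      by (simp add: mult_ac)
    then show "((\<lambda>s. h (u + s*(v-u))) has_vector_derivative (v-u) * g1 (u + s*(v-u))) (at s within {0..1})"
      by (simp add: has_real_derivative_iff_has_vector_derivative has_vector_derivative_at_within)
  qed simp
  then have "((\<lambda>s. (v-u) * g1 (u + s*(v-u)) * (1/(v-u))) has_integral (h (u + 1*(v-u)) - h (u + 0*(v-u))) * (1/(v-u))) {0..1}"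
    by (rule has_integral_mult_left)
  moreover have "(\<lambda>s. (v-u) * g1 (u + s*(v-u)) * (1/(v-u))) = (\<lambda>s. g1 (u + s*(v-u)))"
    using uv by (intro ext) simp
  ultimately have "((\<lambda>s. g1 (u + s*(v-u))) has_integral (h v - h u) / (v-u)) {0..1}"
    by simp
  then show ?thesis unfolding Mh_def by (simp add: integral_unique)
qed

theorem lemma2:
  fixes F h :: "real \<Rightarrow> real" and n k r :: nat and l c :: real
  assumes "n \<ge> 2" and "1 \<le> k" and "k \<le> n - 1" and "r \<ge> 1"
    and "c > 0"
    and F_def: "\<And>x. F x = (if x < l then 0 else 1 - exp (- c * (x - l)))"
    and h_cont: "continuous_on {l..} h"
    and h_diff: "\<And>j x. j < k + r - 1 \<Longrightarrow> l < x \<Longrightarrow> (deriv ^^ j) h differentiable (at x)"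
    and h_cont_deriv: "continuous_on {l<..} ((deriv ^^ (k + r - 1)) h)"
  shows "\<And>u v. l < u \<Longrightarrow> u < v \<Longrightarrow>
    cond_exp F k r ((deriv ^^ (k + r - 1)) h) u v
      = fact (k + r - 1) / (fact (k - 1) * fact (r - 1)) * Mij h (r - 1) (k - 1) u v"
proof -
  fix u v :: real assume lu: "l < u" and uv: "u < v"
  have lv: "l < v" using lu uv by simp
  define N where "N = k + r - 1"
  define g where "g = (\<lambda>m. (deriv ^^ m) h)"
  have gS: "g (Suc m) = deriv (g m)" for m by (simp add: g_def)
  have der: "(g m has_real_derivative g (Suc m) x) (at x)" if "m < N" "l < x" for m x
    using h_diff[of m x] that unfolding gS N_def g_def
    by (simp add: DERIV_deriv_iff_real_differentiable)
  have cont: "continuous_on {l<..} (g m)" if "m \<le> N" for m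
  proof (cases "m = N")
    case True then show ?thesis using h_cont_deriv by (simp add: g_def N_def)
  next
    case False
    then have "m < N" using that by simp
    then show ?thesis
      by (intro continuous_at_imp_continuous_on ballI DERIV_isCont[OF der]) auto
  qed
  have g0: "g 0 = h" by (simp add: g_def)
  have N1: "0 < N" using assms by (simp add: N_def)
  have inner: "\<forall>v'. l < v' \<longrightarrow> v' \<noteq> u' \<longrightarrow> (deriv ^^ j) (\<lambda>v'. Mh h u' v') v' = JJ g 0 j u' v'"
    if "l < u'" "j \<le> k - 1" for u' j
    using that(2)
  proof (induction j)
    case 0
    show ?case
    proof (intro allI impI)
      fix v' assume "l < v'" "v' \<noteq> u'"
      then show "(deriv ^^ 0) (\<lambda>v'. Mh h u' v') v' = JJ g 0 0 u' v'"
        using JJ_base[of l h "g 1" u' v'] der[of 0] N1 that(1) g0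
        by (simp add: JJ_def)
    qed
  next
    case (Suc j)
    have IH: "\<forall>v'. l < v' \<longrightarrow> v' \<noteq> u' \<longrightarrow> (deriv ^^ j) (\<lambda>v'. Mh h u' v') v' = JJ g 0 j u' v'"
      using Suc by simp
    show ?case
    proof (intro allI impI)
      fix v' assume v': "l < v'" "v' \<noteq> u'"
      have "(JJ g 0 j u' has_real_derivative JJ g 0 (Suc j) u' v') (at v')"
        using JJ_dv[where N=N and g=g and l=l, OF der cont, of 0 j u' v'] Suc.prems assms v' that(1) by (auto simp: N_def)
      then have "((deriv ^^ j) (\<lambda>v'. Mh h u' v') has_real_derivative JJ g 0 (Suc j) u' v') (at v')"
        by (rule has_field_derivative_transform_within_open[where S = "{l<..} - {u'}"])
           (use v' IH in auto)
      then show "(deriv ^^ Suc j) (\<lambda>v'. Mh h u' v') v' = JJ g 0 (Suc j) u' v'"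
        by (simp add: DERIV_imp_deriv)
    qed
  qed
  define Phi where "Phi = (\<lambda>u'. (deriv ^^ (k-1)) (\<lambda>v'. Mh h u' v') v)"
  have outer: "\<forall>u'. l < u' \<longrightarrow> u' \<noteq> v \<longrightarrow> (deriv ^^ i) Phi u' = JJ g i (k-1) u' v"
    if "i \<le> r - 1" for i
    using that
  proof (induction i)
    case 0
    show ?case unfolding Phi_def using inner lv by auto
  next
    case (Suc i)
    have IH: "\<forall>u'. l < u' \<longrightarrow> u' \<noteq> v \<longrightarrow> (deriv ^^ i) Phi u' = JJ g i (k-1) u' v"
      using Suc by simp
    show ?case
    proof (intro allI impI)
      fix u' assume u': "l < u'" "u' \<noteq> v"
      have "((\<lambda>x. JJ g i (k-1) x v) has_real_derivative JJ g (Suc i) (k-1) u' v) (at u')"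
        using JJ_du[where N=N and g=g and l=l, OF der cont, of i "k-1" u' v] Suc.prems assms u' lv by (auto simp: N_def)
      then have "((deriv ^^ i) Phi has_real_derivative JJ g (Suc i) (k-1) u' v) (at u')"
        by (rule has_field_derivative_transform_within_open[where S = "{l<..} - {v}"])
           (use u' IH in auto)
      then show "(deriv ^^ Suc i) Phi u' = JJ g (Suc i) (k-1) u' v"
        by (simp add: DERIV_imp_deriv)
    qed
  qed
  have MJ: "Mij h (r - 1) (k - 1) u v = JJ g (r-1) (k-1) u v"
    using outer[of "r-1"] lu uv unfolding Mij_def Phi_def by auto
  show "cond_exp F k r ((deriv ^^ (k + r - 1)) h) u v
      = fact (k + r - 1) / (fact (k - 1) * fact (r - 1)) * Mij h (r - 1) (k - 1) u v"
  proof -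
    define C :: real where "C = fact (k + r - 1) / (fact (k - 1) * fact (r - 1))"
    define phi where "phi = (\<lambda>t. g N t * ((t-u)/(v-u))^(k-1) * ((v-t)/(v-u))^(r-1) / (v-u))"
    have haz: "hazR F t = c * (t - l)" if "l \<le> t" for t
      using that by (simp add: hazR_def F_def)
    have dhaz: "deriv (hazR F) t = c" if "l < t" for t
    proof -
      have "((\<lambda>t. c * (t - l)) has_real_derivative c) (at t)"
        by (auto intro!: derivative_eq_intros)
      then have "(hazR F has_real_derivative c) (at t)"
        by (rule has_field_derivative_transform_within_open[where S = "{l<..}"])
           (use that haz in auto)
      then show ?thesis by (rule DERIV_imp_deriv)
    qed
    have cpos: "c \<noteq> 0" using assms by simp
    have eqi: "g N t * cond_dens F k r u v t = C * phi t" if "t \<in> {u<..<v}" for t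
    proof -
      have t: "l < t" using that lu by auto
      have ht: "hazR F t = c*(t-l)" "hazR F u = c*(u-l)" "hazR F v = c*(v-l)"
        using haz[of t] haz[of u] haz[of v] t lu lv by auto
      have e1: "(hazR F t - hazR F u)/(hazR F v - hazR F u) = (t-u)/(v-u)"
        unfolding ht using cpos by (simp add: right_diff_distrib[symmetric])
      have e2: "(hazR F v - hazR F t)/(hazR F v - hazR F u) = (v-t)/(v-u)"
        unfolding ht using cpos by (simp add: right_diff_distrib[symmetric])
      have e3: "deriv (hazR F) t / (hazR F v - hazR F u) = 1/(v-u)"
        unfolding ht dhaz[OF t] using cpos by (simp add: right_diff_distrib[symmetric])
      show ?thesis
        unfolding cond_dens_def phi_def C_def times_divide_eq_right[symmetric] e1 e2 e3
        by (simp add: divide_inverse)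
    qed
    have "cond_exp F k r ((deriv ^^ (k + r - 1)) h) u v = integral {u<..<v} (\<lambda>t. C * phi t)"
      unfolding cond_exp_def using eqi by (intro integral_cong) (auto simp: g_def N_def)
    also have "\<dots> = C * integral {u..v} phi"
      by (simp add: integral_open_interval_real[symmetric])
    also have "integral {u..v} phi = JJ g (r-1) (k-1) u v"
    proof -
      have cphi: "continuous_on {u..v} phi"
        unfolding phi_def
        by (intro continuous_intros continuous_on_subset[OF cont[of N]]) (use lu uv in auto)
      have "((\<lambda>s. (v-u) *\<^sub>R phi (u + s*(v-u))) has_integral integral {u + 0*(v-u)..u + 1*(v-u)} phi) {0..1}"
      proof (rule has_integral_substitution[where c=u and d=v])
        show "(\<lambda>s. u + s*(v-u)) ` {0..1} \<subseteq> {u..v}"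
        proof
          fix y assume "y \<in> (\<lambda>s. u + s*(v-u)) ` {0..1}"
          then obtain s where s: "0 \<le> s" "s \<le> 1" "y = u + s*(v-u)" by auto
          have "s*(v-u) \<le> 1*(v-u)" using s uv by (intro mult_right_mono) auto
          moreover have "0 \<le> s*(v-u)" using s uv by simp
          ultimately show "y \<in> {u..v}" using s by auto
        qed
        show "((\<lambda>s. u + s*(v-u)) has_field_derivative (v-u)) (at s within {0..1})" for s
          by (auto intro!: derivative_eq_intros)
      qed (use uv cphi in auto)
      then have "((\<lambda>s. (v-u) *\<^sub>R phi (u + s*(v-u))) has_integral integral {u..v} phi) {0..1}"
        by simp
      moreover have "(v-u) *\<^sub>R phi (u + s*(v-u)) = g ((r-1) + (k-1) + 1) (u + s*(v-u)) * s^(k-1) * (1-s)^(r-1)" for s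
      proof -
        have a: "(u + s*(v-u) - u)/(v-u) = s" using uv by (simp add: field_simps)
        have b: "(v - (u + s*(v-u)))/(v-u) = 1 - s" using uv by (simp add: field_simps)
        have NN: "(r-1) + (k-1) + 1 = N" using assms by (simp add: N_def)
        show ?thesis unfolding phi_def a b NN using uv by simp
      qed
      ultimately show ?thesis unfolding JJ_def by (simp add: integral_unique)
    qed
    finally show ?thesis using MJ by (simp add: C_def)
  qed
qed

end
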